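(* Let $E=(L^0)^{\mathbb N}$ be the $L^0$-module of all sequences $(x_n)_{n\in\mathbb N}$ in $L^0$, and let $\mathscr P=\{p_k:k\in\mathbb N\}$ with $p_k((x_n))=|x_k|$. Let $E^*_0$ be the set of $L^0$-linear maps $f:E\to L^0$ which are continuous from $(E,\mathscr T_0(\mathscr P))$ to $(L^0,\mathscr T_0(\{|\cdot|\}))$. Then a map $f:E\to L^0$ belongs to $E^*_0$ if and only if there exist $m\in\mathbb N$ and $x_1,\dots,x_m\in L^0$ such that $f((y_n))=\sum_{n=1}^m x_ny_n$ for all $(y_n)\in E$.
   Context: $L^0$ is the ring of real-valued measurable functions on a probability space modulo a.e. equality, ordered a.e.; $L^0_{++}=\{r\in L^0:r>0\text{ a.e.}\}$. For a collection $\mathscr P$ of $L^0$-seminorms (maps $p:E\to L^0_+$ with $p(rx)=|r|p(x)$, $p(x+y)\le p(x)+p(y)$) on an $L^0$-module $E$, $\mathscr T_0(\mathscr P)$ is the topology generated by the base of sets $\{y\in E:\sup_{p\in N}p(x-y)<r\}$ with $x\in E$, $N\subset\mathscr P$ finite, $r\in L^0_{++}$. On $L^0$, $\mathscr T_0(\{|\cdot|\})$ is the topology with base $\{s\in L^0:|s-t|<r\}$, $t\in L^0$, $r\in L^0_{++}$. *)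

theory Defs
  imports "HOL-Probability.Probability"
begin

text \<open>L0 is represented by (representatives) Borel measurable functions; equality in L0
  is almost-everywhere equality w.r.t. the probability measure M.\<close>

definition L0pp :: "'a measure \<Rightarrow> ('a \<Rightarrow> real) set" where
  "L0pp M = {r \<in> borel_measurable M. AE \<omega> in M. 0 < r \<omega>}"

definition Eseq :: "'a measure \<Rightarrow> (nat \<Rightarrow> 'a \<Rightarrow> real) set" where
  "Eseq M = {x. \<forall>n. x n \<in> borel_measurable M}"

text \<open>The supremum of finitely many nonnegative functions is the pointwise maximum
  (with 0 for N empty); a strict inequality in L0 is read almost everywhere.\<close>
definition T0 :: "'a measure \<Rightarrow> 'e::minus set \<Rightarrow> ('e \<Rightarrow> 'a \<Rightarrow> real) set \<Rightarrow> 'e topology" where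
  "T0 M C P = topology_generated_by
     {{y \<in> C. AE \<omega> in M. Max (insert 0 {p (x - y) \<omega> | p. p \<in> N}) < r \<omega>}
       | x N r. x \<in> C \<and> finite N \<and> N \<subseteq> P \<and> r \<in> L0pp M}"

definition Pseq :: "((nat \<Rightarrow> 'a \<Rightarrow> real) \<Rightarrow> 'a \<Rightarrow> real) set" where
  "Pseq = {(\<lambda>x \<omega>. \<bar>x k \<omega>\<bar>) | k. True}"

definition absL0 :: "('a \<Rightarrow> real) \<Rightarrow> 'a \<Rightarrow> real" where
  "absL0 s = (\<lambda>\<omega>. \<bar>s \<omega>\<bar>)"

definition L0linear :: "'a measure \<Rightarrow> ((nat \<Rightarrow> 'a \<Rightarrow> real) \<Rightarrow> 'a \<Rightarrow> real) \<Rightarrow> bool" where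
  "L0linear M f \<longleftrightarrow>
     (\<forall>r \<in> borel_measurable M. \<forall>s \<in> borel_measurable M. \<forall>y \<in> Eseq M. \<forall>z \<in> Eseq M.
        AE \<omega> in M. f (\<lambda>n \<omega>'. r \<omega>' * y n \<omega>' + s \<omega>' * z n \<omega>') \<omega> = r \<omega> * f y \<omega> + s \<omega> * f z \<omega>)"

definition dual0 :: "'a measure \<Rightarrow> ((nat \<Rightarrow> 'a \<Rightarrow> real) \<Rightarrow> 'a \<Rightarrow> real) set" where
  "dual0 M = {f. L0linear M f \<and>
     continuous_map (T0 M (Eseq M) Pseq) (T0 M (borel_measurable M) {absL0}) f}"

end

theory Submission imports Defs begin

definition mx :: "('e \<Rightarrow> 'a \<Rightarrow> real) set \<Rightarrow> 'e \<Rightarrow> 'a \<Rightarrow> real" where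
  "mx N v \<omega> = Max (insert 0 {p v \<omega> | p. p \<in> N})"

lemma mx_less: "finite N \<Longrightarrow> mx N v \<omega> < c \<longleftrightarrow> 0 < c \<and> (\<forall>p\<in>N. p v \<omega> < c)"
proof -
  assume f: "finite N"
  have e: "{p v \<omega> | p. p \<in> N} = (\<lambda>p. p v \<omega>) ` N" by auto
  show ?thesis unfolding mx_def e using f by (subst Max_less_iff) auto
qed

lemma mx_meas:
  assumes "finite N" "\<forall>p\<in>N. p v \<in> borel_measurable M"
  shows "mx N v \<in> borel_measurable M"
proof -
  have e: "\<And>\<omega>. insert 0 {p v \<omega> | p. p \<in> N} = (\<lambda>p. p v \<omega>) ` insert (\<lambda>_ _. 0) N" by auto
  show ?thesis unfolding mx_def e
    by (rule borel_measurable_Max) (use assms in auto)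
qed

lemma T0_eq: "T0 M C P = topology_generated_by
     {{y \<in> C. AE \<omega> in M. mx N (x - y) \<omega> < r \<omega>}
       | x N r. x \<in> C \<and> finite N \<and> N \<subseteq> P \<and> r \<in> L0pp M}"
  unfolding T0_def mx_def by simp

lemma one_L0pp: "(\<lambda>_. 1) \<in> L0pp M" unfolding L0pp_def by auto

lemma topspace_T0: "topspace (T0 M C P) = C"
proof -
  have "C \<subseteq> \<Union>{{y \<in> C. AE \<omega> in M. mx N (x - y) \<omega> < r \<omega>}
       | x N r. x \<in> C \<and> finite N \<and> N \<subseteq> P \<and> r \<in> L0pp M}"
  proof
    fix y assume y: "y \<in> C"
    have "y \<in> {z \<in> C. AE \<omega> in M. mx {} (y - z) \<omega> < (\<lambda>_. 1::real) \<omega>}"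
      using y by (simp add: mx_less)
    then show "y \<in> \<Union>{{y \<in> C. AE \<omega> in M. mx N (x - y) \<omega> < r \<omega>}
       | x N r. x \<in> C \<and> finite N \<and> N \<subseteq> P \<and> r \<in> L0pp M}"
      using y one_L0pp[of M] by blast
  qed
  then show ?thesis unfolding T0_eq by auto
qed

lemma T0_nbhd:
  assumes tri: "\<forall>p\<in>P. \<forall>x y z \<omega>. p (x - z) \<omega> \<le> p (x - y) \<omega> + p (y - z) \<omega>"
  and meas: "\<forall>p\<in>P. \<forall>x\<in>C. \<forall>y\<in>C. p (x - y) \<in> borel_measurable M"
  and op: "openin (T0 M C P) U"
  shows "\<forall>y\<in>U. \<exists>N \<delta>. finite N \<and> N \<subseteq> P \<and> \<delta> \<in> L0pp M \<and>
            {z \<in> C. AE \<omega> in M. mx N (y - z) \<omega> < \<delta> \<omega>} \<subseteq> U"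
  using op unfolding T0_eq openin_topology_generated_by_iff
proof (induction rule: generate_topology_on.induct)
  case Empty
  then show ?case by simp
next
  case (Int a b)
  show ?case
  proof
    fix y assume y: "y \<in> a \<inter> b"
    then have ya: "y \<in> a" and yb: "y \<in> b" by simp_all
    obtain N1 d1 where 1: "finite N1" "N1 \<subseteq> P" "d1 \<in> L0pp M"
       "{z \<in> C. AE \<omega> in M. mx N1 (y - z) \<omega> < d1 \<omega>} \<subseteq> a"
      using bspec[OF Int.IH(1) ya] by (elim exE conjE)
    obtain N2 d2 where 2: "finite N2" "N2 \<subseteq> P" "d2 \<in> L0pp M"
       "{z \<in> C. AE \<omega> in M. mx N2 (y - z) \<omega> < d2 \<omega>} \<subseteq> b"
      using bspec[OF Int.IH(2) yb] by (elim exE conjE)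
    define d where "d = (\<lambda>\<omega>. min (d1 \<omega>) (d2 \<omega>))"
    have dL: "d \<in> L0pp M"
    proof -
      have m1: "d1 \<in> borel_measurable M" "AE \<omega> in M. 0 < d1 \<omega>" using 1(3) unfolding L0pp_def by simp_all
      have m2: "d2 \<in> borel_measurable M" "AE \<omega> in M. 0 < d2 \<omega>" using 2(3) unfolding L0pp_def by simp_all
      have "d \<in> borel_measurable M" unfolding d_def using m2(1) m1(1) by (rule borel_measurable_min)
      moreover have "AE \<omega> in M. 0 < d \<omega>" using m1(2) m2(2) by eventually_elim (simp add: d_def)
      ultimately show ?thesis unfolding L0pp_def by simp
    qed
    have fN: "finite (N1 \<union> N2)" using 1(1) 2(1) by simp
    have sub: "{z \<in> C. AE \<omega> in M. mx (N1 \<union> N2) (y - z) \<omega> < d \<omega>} \<subseteq> a \<inter> b"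
    proof
      fix z assume z: "z \<in> {z \<in> C. AE \<omega> in M. mx (N1 \<union> N2) (y - z) \<omega> < d \<omega>}"
      have zC: "z \<in> C" using z by simp
      have zz: "AE \<omega> in M. mx (N1 \<union> N2) (y - z) \<omega> < d \<omega>" using z by simp
      have "AE \<omega> in M. mx N1 (y - z) \<omega> < d1 \<omega>" using zz
        by eventually_elim (simp add: mx_less[OF fN] mx_less[OF 1(1)] d_def)
      then have za: "z \<in> a" using zC 1(4) by blast
      have "AE \<omega> in M. mx N2 (y - z) \<omega> < d2 \<omega>" using zz
        by eventually_elim (simp add: mx_less[OF fN] mx_less[OF 2(1)] d_def)
      then have zb: "z \<in> b" using zC 2(4) by blast
      show "z \<in> a \<inter> b" using za zb by simp
    qed
    have NP: "N1 \<union> N2 \<subseteq> P" using 1(2) 2(2) by simp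
    show "\<exists>N \<delta>. finite N \<and> N \<subseteq> P \<and> \<delta> \<in> L0pp M \<and>
            {z \<in> C. AE \<omega> in M. mx N (y - z) \<omega> < \<delta> \<omega>} \<subseteq> a \<inter> b"
      using fN NP dL sub by blast
  qed
next
  case (UN K)
  then show ?case by (meson Union_iff subset_trans Union_upper)
next
  case (Basis s)
  then obtain x N r where s: "s = {y \<in> C. AE \<omega> in M. mx N (x - y) \<omega> < r \<omega>}"
    and x: "x \<in> C" and N: "finite N" "N \<subseteq> P" and r: "r \<in> L0pp M" by blast
  show ?case
  proof
    fix y assume y: "y \<in> s"
    define d where "d = (\<lambda>\<omega>. r \<omega> - mx N (x - y) \<omega>)"
    have ym: "y \<in> C" using y s by auto
    have mxm: "mx N (x - y) \<in> borel_measurable M"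
      using N x ym meas by (intro mx_meas) auto
    have rm: "r \<in> borel_measurable M" using r unfolding L0pp_def by simp
    have dm: "d \<in> borel_measurable M" unfolding d_def using rm mxm by (rule borel_measurable_diff)
    have "AE \<omega> in M. mx N (x - y) \<omega> < r \<omega>" using y s by simp
    then have "AE \<omega> in M. 0 < d \<omega>" by eventually_elim (simp add: d_def)
    with dm have "d \<in> L0pp M" unfolding L0pp_def by simp
    moreover have "{z \<in> C. AE \<omega> in M. mx N (y - z) \<omega> < d \<omega>} \<subseteq> s"
    proof
      fix z assume z: "z \<in> {z \<in> C. AE \<omega> in M. mx N (y - z) \<omega> < d \<omega>}"
      have zz: "AE \<omega> in M. mx N (y - z) \<omega> < d \<omega>" using z by simp
      have "AE \<omega> in M. mx N (x - z) \<omega> < r \<omega>"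
        using zz
      proof eventually_elim
        case (elim \<omega>)
        then have a: "mx N (y - z) \<omega> < d \<omega>" .
        have b: "\<forall>p\<in>N. p (x - y) \<omega> \<le> mx N (x - y) \<omega>"
          unfolding mx_def using N(1) by (auto intro!: Max_ge)
        show "mx N (x - z) \<omega> < r \<omega>"
          unfolding mx_less[OF N(1)]
        proof
          have "0 \<le> mx N (x - y) \<omega>" unfolding mx_def using N(1) by (auto intro!: Max_ge)
          then show "0 < r \<omega>" using a N(1) unfolding d_def by (simp add: mx_less)
          show "\<forall>p\<in>N. p (x - z) \<omega> < r \<omega>"
          proof
            fix p assume p: "p \<in> N"
            have h1: "p (x - z) \<omega> \<le> p (x - y) \<omega> + p (y - z) \<omega>" using tri p N(2) by blast
            have h2: "p (y - z) \<omega> < d \<omega>" using a p N(1) by (simp add: mx_less)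
            have h3: "p (x - y) \<omega> \<le> mx N (x - y) \<omega>" using b p by blast
            show "p (x - z) \<omega> < r \<omega>" using h1 h2 h3 unfolding d_def by linarith
          qed
        qed
      qed
      then show "z \<in> s" using z s by simp
    qed
    ultimately show "\<exists>N \<delta>. finite N \<and> N \<subseteq> P \<and> \<delta> \<in> L0pp M \<and>
            {z \<in> C. AE \<omega> in M. mx N (y - z) \<omega> < \<delta> \<omega>} \<subseteq> s"
      using N by blast
  qed
qed

lemma T0_openI:
  assumes zero: "\<forall>p\<in>P. \<forall>x \<omega>. p (x - x) \<omega> = 0"
  and sub: "U \<subseteq> C"
  and nb: "\<forall>y\<in>U. \<exists>N \<delta>. finite N \<and> N \<subseteq> P \<and> \<delta> \<in> L0pp M \<and>
            {z \<in> C. AE \<omega> in M. mx N (y - z) \<omega> < \<delta> \<omega>} \<subseteq> U"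
  shows "openin (T0 M C P) U"
proof -
  let ?S = "{{y \<in> C. AE \<omega> in M. mx N (x - y) \<omega> < r \<omega>}
       | x N r. x \<in> C \<and> finite N \<and> N \<subseteq> P \<and> r \<in> L0pp M}"
  have eq: "U = \<Union>{b \<in> ?S. b \<subseteq> U}"
  proof
    show "U \<subseteq> \<Union>{b \<in> ?S. b \<subseteq> U}"
    proof
      fix y assume y: "y \<in> U"
      then obtain N d where N: "finite N" "N \<subseteq> P" "d \<in> L0pp M"
        "{z \<in> C. AE \<omega> in M. mx N (y - z) \<omega> < d \<omega>} \<subseteq> U" using nb by blast
      have yC: "y \<in> C" using y sub by auto
      have z0: "\<forall>p\<in>N. p (y - y) \<omega> = 0" for \<omega> using N(2) zero by blast
      have "AE \<omega> in M. mx N (y - y) \<omega> < d \<omega>"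
      proof -
        have "AE \<omega> in M. 0 < d \<omega>" using N(3) unfolding L0pp_def by simp
        then show ?thesis by eventually_elim (simp add: mx_less[OF N(1)] z0)
      qed
      then have ymem: "y \<in> {z \<in> C. AE \<omega> in M. mx N (y - z) \<omega> < d \<omega>}" using yC by simp
      have mS: "{z \<in> C. AE \<omega> in M. mx N (y - z) \<omega> < d \<omega>} \<in> ?S"
        using yC N(1,2,3) by blast
      have "{z \<in> C. AE \<omega> in M. mx N (y - z) \<omega> < d \<omega>} \<in> {b \<in> ?S. b \<subseteq> U}"
        by (rule CollectI, rule conjI[OF mS N(4)])
      then show "y \<in> \<Union>{b \<in> ?S. b \<subseteq> U}" using ymem by (rule UnionI)
    qed
    show "\<Union>{b \<in> ?S. b \<subseteq> U} \<subseteq> U" by (rule Union_least) (erule CollectE, erule conjE)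
  qed
  have gen: "generate_topology_on ?S (\<Union>{b \<in> ?S. b \<subseteq> U})"
    by (rule generate_topology_on.UN, rule generate_topology_on.Basis, erule CollectE, erule conjE)
  have "generate_topology_on ?S U" using gen unfolding eq[symmetric] .
  then show ?thesis unfolding T0_eq openin_topology_generated_by_iff .
qed


definition pk :: "nat \<Rightarrow> (nat \<Rightarrow> 'a \<Rightarrow> real) \<Rightarrow> 'a \<Rightarrow> real" where
  "pk k = (\<lambda>x \<omega>. \<bar>x k \<omega>\<bar>)"

lemma tri_real: "\<bar>a - c\<bar> \<le> \<bar>a - b\<bar> + \<bar>b - (c::real)\<bar>"
proof -
  have "\<bar>a - c\<bar> = \<bar>(a - b) + (b - c)\<bar>" by simp
  also have "\<dots> \<le> \<bar>a - b\<bar> + \<bar>b - c\<bar>" by (rule abs_triangle_ineq)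
  finally show ?thesis .
qed

lemma Pseq_eq: "Pseq = range pk" unfolding Pseq_def pk_def image_def by simp

lemma Pseq_sub: "finite N \<Longrightarrow> N \<subseteq> Pseq \<Longrightarrow> \<exists>K. finite K \<and> N = pk ` K"
proof -
  assume "finite N" "N \<subseteq> Pseq"
  then have "\<exists>C\<subseteq>UNIV. finite C \<and> N = pk ` C" unfolding Pseq_eq by (rule finite_subset_image)
  then show ?thesis by (elim exE conjE) (rule exI, rule conjI)
qed

lemma mx_pk: "finite K \<Longrightarrow> mx (pk ` K) v \<omega> < c \<longleftrightarrow> 0 < c \<and> (\<forall>k\<in>K. \<bar>v k \<omega>\<bar> < c)"
  by (simp add: mx_less pk_def)

lemma Pseq_tri: "\<forall>p\<in>Pseq. \<forall>x y z \<omega>. p (x - z) \<omega> \<le> p (x - y) \<omega> + p (y - z) \<omega>"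
  unfolding Pseq_eq pk_def by (simp add: tri_real)

lemma Pseq_meas: fixes M :: "'a measure" shows "\<forall>p\<in>Pseq. \<forall>x\<in>Eseq M. \<forall>y\<in>Eseq M. p (x - y) \<in> borel_measurable M"
  unfolding Pseq_eq pk_def Eseq_def by (simp, intro allI impI borel_measurable_abs borel_measurable_diff) auto

lemma Pseq_zero: "\<forall>p\<in>Pseq. \<forall>x \<omega>. p (x - x) \<omega> = 0"
  unfolding Pseq_eq pk_def by simp

lemma abs_tri: "\<forall>p\<in>{absL0}. \<forall>x y z \<omega>. p (x - z) \<omega> \<le> p (x - y) \<omega> + p (y - z) \<omega>"
  unfolding absL0_def by (simp add: tri_real)

lemma abs_meas: "\<forall>p\<in>{absL0}. \<forall>x\<in>borel_measurable M. \<forall>y\<in>borel_measurable M. p (x - y) \<in> borel_measurable M"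
  unfolding absL0_def by simp

lemma abs_zero: "\<forall>p\<in>{absL0}. \<forall>x \<omega>. p (x - x) \<omega> = 0"
  unfolding absL0_def by simp

lemma mx_abs: "N \<subseteq> {absL0} \<Longrightarrow> mx N v \<omega> < c \<longleftrightarrow> 0 < c \<and> (N \<noteq> {} \<longrightarrow> \<bar>v \<omega>\<bar> < c)"
proof -
  assume "N \<subseteq> {absL0}"
  then have "N = {} \<or> N = {absL0}" by blast
  then show ?thesis
  proof
    assume "N = {}" then show ?thesis by (simp add: mx_less)
  next
    assume N: "N = {absL0}"
    have "mx N v \<omega> < c \<longleftrightarrow> 0 < c \<and> (\<forall>p\<in>N. p v \<omega> < c)" using N by (intro mx_less) simp
    also have "(\<forall>p\<in>N. p v \<omega> < c) \<longleftrightarrow> \<bar>v \<omega>\<bar> < c" unfolding N absL0_def by simp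
    finally show ?thesis using N by simp
  qed
qed

lemma Eseq_lin:
  assumes r: "r \<in> borel_measurable M" and s: "s \<in> borel_measurable M"
    and y: "y \<in> Eseq M" and z: "z \<in> Eseq M"
  shows "(\<lambda>n \<omega>. r \<omega> * y n \<omega> + s \<omega> * z n \<omega>) \<in> Eseq M"
  unfolding Eseq_def
proof (rule CollectI, rule allI)
  fix n
  have [measurable]: "y n \<in> borel_measurable M" "z n \<in> borel_measurable M" using y z unfolding Eseq_def by auto
  note [measurable] = r s
  show "(\<lambda>\<omega>. r \<omega> * y n \<omega> + s \<omega> * z n \<omega>) \<in> borel_measurable M" by measurable
qed

theorem mainTheorem5:
  fixes M :: "'a measure" and f :: "(nat \<Rightarrow> 'a \<Rightarrow> real) \<Rightarrow> 'a \<Rightarrow> real"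
  assumes "prob_space M"
    and "\<forall>y \<in> Eseq M. f y \<in> borel_measurable M"
    and "\<forall>y \<in> Eseq M. \<forall>z \<in> Eseq M. (\<forall>n. AE \<omega> in M. y n \<omega> = z n \<omega>) \<longrightarrow> (AE \<omega> in M. f y \<omega> = f z \<omega>)"
  shows "f \<in> dual0 M \<longleftrightarrow>
    (\<exists>(m::nat) (x::nat \<Rightarrow> 'a \<Rightarrow> real). (\<forall>n<m. x n \<in> borel_measurable M) \<and>
       (\<forall>y \<in> Eseq M. AE \<omega> in M. f y \<omega> = (\<Sum>n<m. x n \<omega> * y n \<omega>)))"
proof
  assume fd: "f \<in> dual0 M"
  have lin: "L0linear M f" and cont: "continuous_map (T0 M (Eseq M) Pseq) (T0 M (borel_measurable M) {absL0}) f"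
    using fd unfolding dual0_def by auto
  note linD = lin[unfolded L0linear_def, rule_format]
  define z0 where "z0 = (\<lambda>(n::nat) (\<omega>::'a). 0::real)"
  have z0E: "z0 \<in> Eseq M" unfolding z0_def Eseq_def by auto
  have f0: "AE \<omega> in M. f z0 \<omega> = 0"
    using linD[of "\<lambda>_. 0" "\<lambda>_. 0" z0 z0] z0E by (simp add: z0_def)
  define V where "V = {s \<in> borel_measurable M. AE \<omega> in M. mx {absL0} (f z0 - s) \<omega> < (\<lambda>_. 1) \<omega>}"
  have "openin (T0 M (borel_measurable M) {absL0}) V"
    unfolding T0_eq V_def
  proof (rule topology_generated_by_Basis, rule CollectI, rule exI[of _ "f z0"], rule exI[of _ "{absL0}"], rule exI[of _ "\<lambda>_. 1"], intro conjI)
    show "f z0 \<in> borel_measurable M" using assms(2) z0E by blast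
    show "(\<lambda>_. 1) \<in> L0pp M" by (rule one_L0pp)
  qed simp_all
  moreover have "\<forall>U. openin (T0 M (borel_measurable M) {absL0}) U \<longrightarrow> openin (T0 M (Eseq M) Pseq) {x \<in> Eseq M. f x \<in> U}"
    using cont unfolding continuous_map topspace_T0 by (rule conjunct2)
  ultimately have op: "openin (T0 M (Eseq M) Pseq) {y \<in> Eseq M. f y \<in> V}" by simp
  have fz0V: "f z0 \<in> V" unfolding V_def
  proof (rule CollectI, rule conjI)
    show "f z0 \<in> borel_measurable M" using assms(2) z0E by blast
    show "AE \<omega> in M. mx {absL0} (f z0 - f z0) \<omega> < (\<lambda>_. 1) \<omega>" by (rule AE_I2) (simp add: mx_abs)
  qed
  have z0in: "z0 \<in> {y \<in> Eseq M. f y \<in> V}" using z0E fz0V by simp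
  have "\<exists>N \<delta>. finite N \<and> N \<subseteq> Pseq \<and> \<delta> \<in> L0pp M \<and>
            {z \<in> Eseq M. AE \<omega> in M. mx N (z0 - z) \<omega> < \<delta> \<omega>} \<subseteq> {y \<in> Eseq M. f y \<in> V}"
    using T0_nbhd[OF Pseq_tri Pseq_meas op] z0in by (rule bspec)
  then obtain N d where N: "finite N" "N \<subseteq> Pseq" "d \<in> L0pp M"
     "{z \<in> Eseq M. AE \<omega> in M. mx N (z0 - z) \<omega> < d \<omega>} \<subseteq> {y \<in> Eseq M. f y \<in> V}"
    by (elim exE conjE)
  obtain K where K: "finite K" "N = pk ` K" using Pseq_sub[OF N(1) N(2)] by (elim exE conjE)
  obtain m where m: "K \<subseteq> {..<m}" using finite_nat_bounded[OF K(1)] by (elim exE)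
  have claimA: "AE \<omega> in M. f y \<omega> = 0" if y: "y \<in> Eseq M" and y0: "\<forall>n<m. y n = (\<lambda>_. 0)" for y
  proof -
    have "AE \<omega> in M. \<bar>f y \<omega>\<bar> * real j < 1" for j :: nat
    proof -
      define w where "w = (\<lambda>n \<omega>'. real j * y n \<omega>' + 0 * y n \<omega>')"
      have wE: "w \<in> Eseq M" using Eseq_lin[of "\<lambda>_. real j" M "\<lambda>_. 0" y y] y unfolding w_def by simp
      have dpos: "AE \<omega> in M. 0 < d \<omega>" using N(3) unfolding L0pp_def by simp
      have "AE \<omega> in M. mx N (z0 - w) \<omega> < d \<omega>"
        using dpos unfolding K(2)
      proof eventually_elim
        case (elim \<omega>)
        have "\<forall>k\<in>K. (z0 - w) k \<omega> = 0" using m y0 unfolding z0_def w_def by auto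
        then show ?case using K(1) elim by (simp add: mx_pk)
      qed
      then have "w \<in> {z \<in> Eseq M. AE \<omega> in M. mx N (z0 - z) \<omega> < d \<omega>}" using wE by simp
      then have "w \<in> {y \<in> Eseq M. f y \<in> V}" using N(4) by (rule rev_subsetD)
      then have "f w \<in> V" by simp
      then have "AE \<omega> in M. mx {absL0} (f z0 - f w) \<omega> < 1" unfolding V_def by simp
      then have A: "AE \<omega> in M. \<bar>f z0 \<omega> - f w \<omega>\<bar> < 1"
        by eventually_elim (simp add: mx_abs)
      have B: "AE \<omega> in M. f w \<omega> = real j * f y \<omega> + 0 * f y \<omega>"
        using linD[of "\<lambda>_. real j" "\<lambda>_. 0" y y] y unfolding w_def by simp
      show ?thesis using A B f0 by eventually_elim (simp add: abs_mult mult.commute)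
    qed
    then have "AE \<omega> in M. \<forall>j::nat. \<bar>f y \<omega>\<bar> * real j < 1" by (simp add: AE_all_countable)
    then show ?thesis
    proof (rule AE_mp, intro AE_I2 impI)
      fix \<omega> assume h: "\<forall>j::nat. \<bar>f y \<omega>\<bar> * real j < 1"
      show "f y \<omega> = 0"
      proof (rule ccontr)
        assume "f y \<omega> \<noteq> 0"
        then have "0 < \<bar>f y \<omega>\<bar>" by simp
        then obtain j :: nat where "1 < real j * \<bar>f y \<omega>\<bar>" using ex_less_of_nat_mult by blast
        with h show False by (simp add: mult.commute) (metis less_asym)
      qed
    qed
  qed
  define e where "e = (\<lambda>(n::nat) (k::nat) (\<omega>::'a). if k = n then 1 else (0::real))"
  define rest where "rest = (\<lambda>(j::nat) (y::nat \<Rightarrow> 'a \<Rightarrow> real) (n::nat). if n < j then (\<lambda>\<omega>::'a. 0::real) else y n)"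
  have eE: "e n \<in> Eseq M" for n unfolding e_def Eseq_def by auto
  have rE: "rest j y \<in> Eseq M" if "y \<in> Eseq M" for j y using that unfolding rest_def Eseq_def by auto
  have claimB: "AE \<omega> in M. f y \<omega> = (\<Sum>n<j. y n \<omega> * f (e n) \<omega>) + f (rest j y) \<omega>"
    if y: "y \<in> Eseq M" for y j
  proof (induction j)
    case 0
    have "rest 0 y = y" unfolding rest_def by auto
    then show ?case by simp
  next
    case (Suc j)
    have eq: "rest j y = (\<lambda>k \<omega>'. y j \<omega>' * e j k \<omega>' + (\<lambda>_. 1) \<omega>' * rest (Suc j) y k \<omega>')"
      unfolding rest_def e_def by (auto intro!: ext simp: less_Suc_eq)
    have yj: "y j \<in> borel_measurable M" using y unfolding Eseq_def by auto
    have one: "(\<lambda>_. 1::real) \<in> borel_measurable M" by simp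
    have "AE \<omega> in M. f (\<lambda>k \<omega>'. y j \<omega>' * e j k \<omega>' + (\<lambda>_. 1) \<omega>' * rest (Suc j) y k \<omega>') \<omega> = y j \<omega> * f (e j) \<omega> + (\<lambda>_. 1) \<omega> * f (rest (Suc j) y) \<omega>"
      by (rule linD[of "y j" "\<lambda>_. 1" "e j" "rest (Suc j) y", OF yj one eE rE[OF y]])
    then have "AE \<omega> in M. f (rest j y) \<omega> = y j \<omega> * f (e j) \<omega> + 1 * f (rest (Suc j) y) \<omega>"
      unfolding eq[symmetric] by simp
    with Suc.IH show ?case by eventually_elim simp
  qed
  show "\<exists>(m::nat) (x::nat \<Rightarrow> 'a \<Rightarrow> real). (\<forall>n<m. x n \<in> borel_measurable M) \<and>
       (\<forall>y \<in> Eseq M. AE \<omega> in M. f y \<omega> = (\<Sum>n<m. x n \<omega> * y n \<omega>))"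
  proof (intro exI[of _ m] exI[of _ "\<lambda>n. f (e n)"] conjI ballI allI impI)
    show "f (e n) \<in> borel_measurable M" for n using assms(2) eE by blast
    fix y assume y: "y \<in> Eseq M"
    have "AE \<omega> in M. f (rest m y) \<omega> = 0" by (rule claimA[OF rE[OF y]]) (simp add: rest_def)
    with claimB[OF y, of m] show "AE \<omega> in M. f y \<omega> = (\<Sum>n<m. f (e n) \<omega> * y n \<omega>)"
      by eventually_elim (simp add: mult.commute)
  qed
next
  assume "\<exists>(m::nat) (x::nat \<Rightarrow> 'a \<Rightarrow> real). (\<forall>n<m. x n \<in> borel_measurable M) \<and>
       (\<forall>y \<in> Eseq M. AE \<omega> in M. f y \<omega> = (\<Sum>n<m. x n \<omega> * y n \<omega>))"
  then obtain m x where xm: "\<forall>n<m. x n \<in> borel_measurable M"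
    and H: "\<forall>y \<in> Eseq M. AE \<omega> in M. f y \<omega> = (\<Sum>n<m. x n \<omega> * y n \<omega>)" by blast
  have lin: "L0linear M f"
    unfolding L0linear_def
  proof (intro ballI)
    fix r s :: "'a \<Rightarrow> real" and y z :: "nat \<Rightarrow> 'a \<Rightarrow> real" assume r: "r \<in> borel_measurable M" and s: "s \<in> borel_measurable M"
      and y: "y \<in> Eseq M" and z: "z \<in> Eseq M"
    let ?w = "\<lambda>n \<omega>'. r \<omega>' * y n \<omega>' + s \<omega>' * z n \<omega>'"
    have wE: "?w \<in> Eseq M" using r s y z by (rule Eseq_lin)
    show "AE \<omega> in M. f ?w \<omega> = r \<omega> * f y \<omega> + s \<omega> * f z \<omega>"
      using H wE y z
    proof -
      have "AE \<omega> in M. f ?w \<omega> = (\<Sum>n<m. x n \<omega> * ?w n \<omega>)" by (rule bspec[OF H wE])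
      moreover have "AE \<omega> in M. f y \<omega> = (\<Sum>n<m. x n \<omega> * y n \<omega>)" by (rule bspec[OF H y])
      moreover have "AE \<omega> in M. f z \<omega> = (\<Sum>n<m. x n \<omega> * z n \<omega>)" by (rule bspec[OF H z])
      ultimately show ?thesis
        by eventually_elim (simp add: sum_distrib_left sum.distrib algebra_simps)
    qed
  qed
  have cont: "continuous_map (T0 M (Eseq M) Pseq) (T0 M (borel_measurable M) {absL0}) f"
    unfolding continuous_map topspace_T0
  proof (intro conjI allI impI)
    show "f ` Eseq M \<subseteq> borel_measurable M" using assms(2) by auto
    fix V assume V: "openin (T0 M (borel_measurable M) {absL0}) V"
    show "openin (T0 M (Eseq M) Pseq) {y \<in> Eseq M. f y \<in> V}"
    proof (rule T0_openI[OF Pseq_zero], simp, intro ballI)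
      fix y assume yW: "y \<in> {y \<in> Eseq M. f y \<in> V}"
      then have y: "y \<in> Eseq M" and fyV: "f y \<in> V" by auto
      obtain N eps where N: "finite N" "N \<subseteq> {absL0}" "eps \<in> L0pp M"
        "{s \<in> borel_measurable M. AE \<omega> in M. mx N (f y - s) \<omega> < eps \<omega>} \<subseteq> V"
        using bspec[OF T0_nbhd[OF abs_tri abs_meas V] fyV] by (elim exE conjE)
      define d where "d = (\<lambda>\<omega>. eps \<omega> / (1 + (\<Sum>n<m. \<bar>x n \<omega>\<bar>)))"
      have pos: "0 < 1 + (\<Sum>n<m. \<bar>x n \<omega>\<bar>)" for \<omega> by (simp add: add_pos_nonneg sum_nonneg)
      have em: "eps \<in> borel_measurable M" and epos: "AE \<omega> in M. 0 < eps \<omega>" using N(3) unfolding L0pp_def by simp_all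
      have sm: "(\<lambda>\<omega>. \<Sum>n<m. \<bar>x n \<omega>\<bar>) \<in> borel_measurable M"
        by (rule borel_measurable_sum, rule borel_measurable_abs) (use xm in simp)
      note [measurable] = em sm
      have "d \<in> borel_measurable M" unfolding d_def by measurable
      moreover have "AE \<omega> in M. 0 < d \<omega>" using epos by eventually_elim (simp add: d_def pos)
      ultimately have dL: "d \<in> L0pp M" unfolding L0pp_def by simp
      have subU: "{z \<in> Eseq M. AE \<omega> in M. mx (pk ` {..<m}) (y - z) \<omega> < d \<omega>} \<subseteq> {y \<in> Eseq M. f y \<in> V}"
      proof
        fix z assume z: "z \<in> {z \<in> Eseq M. AE \<omega> in M. mx (pk ` {..<m}) (y - z) \<omega> < d \<omega>}"
        then have zE: "z \<in> Eseq M" and zd0: "AE \<omega> in M. mx (pk ` {..<m}) (y - z) \<omega> < d \<omega>" by simp_all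
        have zd: "AE \<omega> in M. 0 < d \<omega> \<and> (\<forall>k<m. \<bar>y k \<omega> - z k \<omega>\<bar> < d \<omega>)"
          using zd0 by eventually_elim (simp add: mx_pk)
        have "AE \<omega> in M. mx N (f y - f z) \<omega> < eps \<omega>"
          using zd H[rule_format, OF y] H[rule_format, OF zE]
        proof eventually_elim
          case (elim \<omega>)
          have ep: "0 < eps \<omega>" using elim(1) pos[of \<omega>] unfolding d_def
            by (simp add: zero_less_divide_iff)
          have "\<bar>f y \<omega> - f z \<omega>\<bar> = \<bar>\<Sum>n<m. x n \<omega> * (y n \<omega> - z n \<omega>)\<bar>"
            using elim by (simp add: sum_subtractf right_diff_distrib)
          also have "\<dots> \<le> (\<Sum>n<m. \<bar>x n \<omega>\<bar> * \<bar>y n \<omega> - z n \<omega>\<bar>)"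
            by (rule order_trans[OF sum_abs]) (simp add: abs_mult)
          also have "\<dots> \<le> (\<Sum>n<m. \<bar>x n \<omega>\<bar> * d \<omega>)"
            using elim(1) by (intro sum_mono mult_left_mono) auto
          also have "\<dots> = d \<omega> * (\<Sum>n<m. \<bar>x n \<omega>\<bar>)" by (simp add: sum_distrib_left mult.commute)
          also have "\<dots> < d \<omega> * (1 + (\<Sum>n<m. \<bar>x n \<omega>\<bar>))" using elim(1) by simp
          also have "\<dots> = eps \<omega>" unfolding d_def using pos[of \<omega>] by simp
          finally show ?case using N(2) ep by (simp add: mx_abs)
        qed
        moreover have "f z \<in> borel_measurable M" using assms(2) zE by (rule bspec)
        ultimately have "f z \<in> {s \<in> borel_measurable M. AE \<omega> in M. mx N (f y - s) \<omega> < eps \<omega>}" by simp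
        then have "f z \<in> V" using N(4) by (rule rev_subsetD)
        then show "z \<in> {y \<in> Eseq M. f y \<in> V}" using zE by simp
      qed
      have fin: "finite (pk ` {..<m})" by simp
      have psub: "pk ` {..<m} \<subseteq> Pseq" unfolding Pseq_eq by (rule image_mono) simp
      show "\<exists>N \<delta>. finite N \<and> N \<subseteq> Pseq \<and> \<delta> \<in> L0pp M \<and>
            {z \<in> Eseq M. AE \<omega> in M. mx N (y - z) \<omega> < \<delta> \<omega>} \<subseteq> {y \<in> Eseq M. f y \<in> V}"
        by (rule exI[of _ "pk ` {..<m}"], rule exI[of _ d]) (intro conjI fin psub dL subU)
    qed
  qed
  show "f \<in> dual0 M" unfolding dual0_def using lin cont by blast
qed

end
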